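(* Let $\alpha,\tau\colon\mathbb{R}\to\mathbb{R}$ be continuous, let $\eta(w)=w+\frac{\alpha(w)}{2}$, and suppose that $\frac{\alpha(s)-\alpha(t)}{s-t}\ge-2$ for all $s<t$, that $\eta(\mathbb{R})=\mathbb{R}$, and that $\mathrm{Lip}(\tau)<2$. Then there is a unique ruled intrinsic graph $\Sigma_{\tau,\alpha}$ with boundary $\partial\Sigma_{\tau,\alpha}=\gamma_\tau\cup X\gamma_\alpha$.
   Context: $\mathbb{H}$ is $\mathbb{R}^3$ with product $(x,y,z)\cdot(x',y',z')=(x+x',y+y',z+z'+\frac{xy'-yx'}{2})$; $X=(1,0,0)$, $Y^t=(0,t,0)$. A horizontal line is $\{p\cdot tv:t\in\mathbb{R}\}$, $v=(a,b,0)\ne0$; a ruled surface is a union of horizontal segments (rulings) with endpoints in its boundary. $V_0=\{(x,0,z)\}$; an intrinsic graph is a set $\Gamma_f=\{u\cdot Y^{f(u)}:u\in D\}$ for some $D\subset V_0$ and $f\colon D\to\mathbb{R}$. For $\phi\colon\mathbb{R}\to\mathbb{R}$, $\gamma_\phi=\{(0,\phi(z),z):z\in\mathbb{R}\}$ is its graph in the $yz$-plane, and $X\gamma_\alpha=\{X\cdot p:p\in\gamma_\alpha\}=\{(1,\alpha(z),z+\frac{\alpha(z)}2):z\in\mathbb{R}\}$. *)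

theory Defs
  imports "HOL-Analysis.Analysis"
begin

type_synonym heis = "real \<times> real \<times> real"

definition heis_mult :: "heis \<Rightarrow> heis \<Rightarrow> heis" where
  "heis_mult p q = (case p of (x, y, z) \<Rightarrow> case q of (x', y', z') \<Rightarrow>
     (x + x', y + y', z + z' + (x * y' - y * x') / 2))"

definition heisX :: heis where "heisX = (1, 0, 0)"

definition heisY :: "real \<Rightarrow> heis" where "heisY t = (0, t, 0)"

definition V0 :: "heis set" where "V0 = {(x, 0, z) | x z. True}"

definition horizontal :: "heis \<Rightarrow> bool" where
  "horizontal v \<longleftrightarrow> snd (snd v) = 0 \<and> v \<noteq> (0, 0, 0)"

definition hscale :: "real \<Rightarrow> heis \<Rightarrow> heis" where
  "hscale t v = (t * fst v, t * fst (snd v), t * snd (snd v))"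

definition horiz_seg :: "heis \<Rightarrow> heis \<Rightarrow> heis set" where
  "horiz_seg p v = {heis_mult p (hscale t v) | t. 0 \<le> t \<and> t \<le> 1}"

definition intrinsic_graph :: "heis set \<Rightarrow> (heis \<Rightarrow> real) \<Rightarrow> heis set" where
  "intrinsic_graph D f = {heis_mult u (heisY (f u)) | u. u \<in> D}"

definition is_intrinsic_graph :: "heis set \<Rightarrow> bool" where
  "is_intrinsic_graph S \<longleftrightarrow> (\<exists>D f. D \<subseteq> V0 \<and> S = intrinsic_graph D f)"

text \<open>Projection of H onto V_0 along the cosets of Y (p = pi(p) . Y^(y)),
  written in the coordinates (x,z) of V_0.\<close>
definition vproj :: "heis \<Rightarrow> real \<times> real" where
  "vproj p = (fst p, snd (snd p) - fst p * fst (snd p) / 2)"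

definition graph_boundary :: "heis set \<Rightarrow> heis set" where
  "graph_boundary S = {p \<in> S. vproj p \<in> frontier (vproj ` S)}"

definition ruled :: "heis set \<Rightarrow> bool" where
  "ruled S \<longleftrightarrow> (\<exists>F. S = \<Union>F \<and>
     (\<forall>R\<in>F. \<exists>p v. horizontal v \<and> R = horiz_seg p v \<and>
        p \<in> graph_boundary S \<and> heis_mult p v \<in> graph_boundary S))"

definition gamma :: "(real \<Rightarrow> real) \<Rightarrow> heis set" where
  "gamma \<phi> = {(0, \<phi> z, z) | z. True}"

end

theory Submission
  imports Defs
begin

lemma surj_lemma:
  fixes f :: "real \<Rightarrow> real"
  assumes cf: "continuous_on UNIV f" and c: "0 < c"
    and g: "\<And>s t. s \<le> t \<Longrightarrow> c * (t - s) \<le> f t - f s"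
  shows "\<exists>x. f x = y"
proof -
  define a where "a = min 0 ((y - f 0) / c)"
  define b where "b = max 0 ((y - f 0) / c)"
  have "f a \<le> y"
  proof (cases "(y - f 0) / c \<le> 0")
    case True
    then have "a = (y - f 0) / c" by (simp add: a_def)
    moreover have "c * (0 - a) \<le> f 0 - f a" using g[of a 0] True a_def by simp
    ultimately show ?thesis using c by (simp add: field_simps)
  next
    case False
    then have "a = 0" by (simp add: a_def)
    then show ?thesis using False c by (simp add: field_simps)
  qed
  moreover have "y \<le> f b"
  proof (cases "(y - f 0) / c \<ge> 0")
    case True
    then have "b = (y - f 0) / c" by (simp add: b_def)
    moreover have "c * (b - 0) \<le> f b - f 0" using g[of 0 b] True b_def by simp
    ultimately show ?thesis using c by (simp add: field_simps)
  next
    case False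
    then have "b = 0" by (simp add: b_def)
    then show ?thesis using False c by (simp add: field_simps)
  qed
  moreover have "a \<le> b" by (simp add: a_def b_def)
  ultimately show ?thesis using IVT'[of f a y b] continuous_on_subset[OF cf] by blast
qed

lemma graph_of_inj:
  assumes "inj_on vproj S"
  shows "is_intrinsic_graph S"
proof -
  define D where "D = (\<lambda>p. (fst p, 0::real, snd (vproj p))) ` S"
  define f where "f u = fst (snd (THE p. p \<in> S \<and> vproj p = (fst u, snd (snd u))))" for u :: heis
  have key: "f (fst p, 0, snd (vproj p)) = fst (snd p)" if "p \<in> S" for p
  proof -
    have "(THE q. q \<in> S \<and> vproj q = (fst p, snd (vproj p))) = p"
      apply (rule the_equality)
      using that assms by (auto simp: vproj_def inj_on_def)
    then show ?thesis by (simp add: f_def)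
  qed
  have pt: "heis_mult (fst p, 0, snd (vproj p)) (heisY (fst (snd p))) = p" for p
    by (cases p) (auto simp: heis_mult_def heisY_def vproj_def algebra_simps)
  have "S = intrinsic_graph D f"
  proof
    show "S \<subseteq> intrinsic_graph D f"
    proof
      fix p assume "p \<in> S"
      then have "p = heis_mult (fst p, 0, snd (vproj p)) (heisY (f (fst p, 0, snd (vproj p))))"
        using key pt by simp
      then show "p \<in> intrinsic_graph D f" unfolding intrinsic_graph_def D_def using \<open>p \<in> S\<close> by blast
    qed
    show "intrinsic_graph D f \<subseteq> S"
    proof
      fix q assume "q \<in> intrinsic_graph D f"
      then obtain p where "p \<in> S" "q = heis_mult (fst p, 0, snd (vproj p)) (heisY (f (fst p, 0, snd (vproj p))))"
        unfolding intrinsic_graph_def D_def by blast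
      then show "q \<in> S" using key pt by simp
    qed
  qed
  moreover have "D \<subseteq> V0" by (auto simp: D_def V0_def)
  ultimately show ?thesis unfolding is_intrinsic_graph_def by blast
qed

lemma frontier_strip: "frontier ({0..1::real} \<times> (UNIV::real set)) = {0,1} \<times> UNIV"
proof -
  have "closure ({0..1::real} \<times> (UNIV::real set)) = {0..1} \<times> UNIV" by (simp add: closure_Times)
  moreover have "interior ({0..1::real} \<times> (UNIV::real set)) = {0<..<1} \<times> UNIV" by (simp add: interior_Times)
  ultimately show ?thesis unfolding frontier_def by auto
qed

locale rc =
  fixes \<alpha> \<tau> :: "real \<Rightarrow> real" and L :: real
  assumes ca: "continuous_on UNIV \<alpha>" and ct: "continuous_on UNIV \<tau>"
    and slope: "\<forall>s t. s < t \<longrightarrow> (\<alpha> s - \<alpha> t) / (s - t) \<ge> -2"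
    and esurj: "range (\<lambda>w. w + \<alpha> w / 2) = UNIV"
    and L2: "L < 2" and lip: "L-lipschitz_on UNIV \<tau>"
begin

definition eta where "eta w = w + \<alpha> w / 2"
definition hh where "hh z = z - \<tau> z / 2"

lemma eta_mono: assumes "s \<le> t" shows "eta s \<le> eta t"
proof (cases "s = t")
  case False
  then have st: "s < t" using assms by simp
  then have "(\<alpha> s - \<alpha> t) / (s - t) \<ge> -2" using slope by blast
  then have "-2 * (s - t) \<ge> \<alpha> s - \<alpha> t" using st by (simp add: le_divide_eq)
  then show ?thesis by (simp add: eta_def)
qed simp

lemma eta_surj: "\<exists>w. eta w = y"
proof -
  have "y \<in> range (\<lambda>w. w + \<alpha> w / 2)" using esurj by simp
  then show ?thesis by (auto simp: eta_def)
qed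

lemma hh_ge: assumes "s \<le> t" shows "(1 - L/2) * (t - s) \<le> hh t - hh s"
proof -
  have "dist (\<tau> t) (\<tau> s) \<le> L * dist t s" using lipschitz_onD[OF lip] by blast
  then have "\<tau> t - \<tau> s \<le> L * (t - s)" using assms by (simp add: dist_real_def)
  moreover have "(1 - L/2)*(t-s) = (t-s) - L*(t-s)/2" by (simp add: algebra_simps)
  ultimately show ?thesis unfolding hh_def by linarith
qed

lemma cpos: "0 < 1 - L/2" using L2 by simp

lemma hh_strict: assumes "s < t" shows "hh s < hh t"
proof -
  have "0 < (1 - L/2) * (t - s)" using cpos assms by simp
  then show ?thesis using hh_ge[of s t] assms by simp
qed

lemma hh_le_iff: "hh s \<le> hh t \<longleftrightarrow> s \<le> t"
  using hh_strict[of s t] hh_strict[of t s] by (cases s t rule: linorder_cases) auto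

lemma hh_inj: "hh s = hh t \<Longrightarrow> s = t"
  using hh_strict[of s t] hh_strict[of t s] by (cases s t rule: linorder_cases) auto

lemma hh_cont: "continuous_on UNIV hh"
  unfolding hh_def by (auto intro!: continuous_intros ct)

lemma hh_surj: "\<exists>z. hh z = y"
  using surj_lemma[OF hh_cont cpos hh_ge] by blast

definition Z where "Z w = (THE z. hh z = eta w)"

lemma hhZ: "hh (Z w) = eta w"
proof -
  obtain z where z: "hh z = eta w" using hh_surj by blast
  have "hh (THE z. hh z = eta w) = eta w"
  proof (rule theI[of _ z])
    show "hh z = eta w" by (rule z)
  next
    fix x assume "hh x = eta w"
    then have "hh x = hh z" using z by simp
    then show "x = z" by (rule hh_inj)
  qed
  then show ?thesis unfolding Z_def .
qed

lemma Z_unique: "hh z = eta w \<Longrightarrow> z = Z w"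
  by (rule hh_inj) (simp add: hhZ)

lemma Z_mono: "w \<le> w' \<Longrightarrow> Z w \<le> Z w'"
  using hh_le_iff[of "Z w" "Z w'"] hhZ[of w] hhZ[of w'] eta_mono[of w w'] by simp

lemma Z_lip: "\<bar>Z a - Z b\<bar> \<le> \<bar>eta a - eta b\<bar> / (1 - L/2)"
proof -
  have *: "(1 - L/2) * \<bar>Z a - Z b\<bar> \<le> \<bar>eta a - eta b\<bar>"
  proof (cases "Z a \<le> Z b")
    case True
    then show ?thesis using hh_ge[OF True] hhZ[of a] hhZ[of b] by simp
  next
    case False
    then show ?thesis using hh_ge[of "Z b" "Z a"] hhZ[of a] hhZ[of b] by simp
  qed
  then show ?thesis using cpos by (simp add: pos_le_divide_eq mult.commute)
qed

lemma eta_cont: "continuous_on UNIV eta"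
  unfolding eta_def by (auto intro!: continuous_intros ca)

lemma Z_cont: "continuous_on UNIV Z"
proof -
have "\<forall>x\<in>UNIV. \<forall>e>0. \<exists>d>0. \<forall>x'\<in>UNIV. dist x' x < d \<longrightarrow> dist (Z x') (Z x) < e"
proof (intro ballI allI impI)
  fix x e :: real assume e: "0 < e"
  then have "0 < e * (1 - L/2)" using cpos by simp
  then obtain d where d: "d > 0" "\<forall>x'. dist x' x < d \<longrightarrow> dist (eta x') (eta x) < e * (1 - L/2)"
    using eta_cont unfolding continuous_on_iff by blast
  show "\<exists>d>0. \<forall>x'\<in>UNIV. dist x' x < d \<longrightarrow> dist (Z x') (Z x) < e"
  proof (rule exI[of _ d], intro conjI ballI impI)
    show "0 < d" by (rule d(1))
  next
    fix x' assume "dist x' x < d"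
    then have "\<bar>eta x' - eta x\<bar> < e * (1 - L/2)" using d by (simp add: dist_real_def)
    then have "\<bar>eta x' - eta x\<bar> / (1 - L/2) < e" using cpos by (simp add: pos_divide_less_eq)
    then show "dist (Z x') (Z x) < e" using Z_lip[of x' x] by (simp add: dist_real_def)
  qed
qed
  then show ?thesis by (simp only: continuous_on_iff)
qed

definition pp where "pp z = ((0::real), \<tau> z, z)"
definition vv where "vv z w = ((1::real), \<alpha> w - \<tau> z, (0::real))"
definition P where "P t z w = heis_mult (pp z) (hscale t (vv z w))"

lemma P_eq: "P t z w = (t, \<tau> z + t * (\<alpha> w - \<tau> z), z - t * \<tau> z / 2)"
  by (simp add: P_def pp_def vv_def heis_mult_def hscale_def)

definition S0 where "S0 = {P t z w | t z w. 0 \<le> t \<and> t \<le> 1 \<and> hh z = eta w}"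
definition Fam where "Fam = {horiz_seg (pp z) (vv z w) | z w. hh z = eta w}"
definition Gam where "Gam = gamma \<tau> \<union> heis_mult heisX ` gamma \<alpha>"

lemma S0_Union: "S0 = \<Union>Fam"
  unfolding S0_def Fam_def horiz_seg_def P_def by blast

lemma Gam_iff: "p \<in> Gam \<longleftrightarrow> (\<exists>z. p = (0, \<tau> z, z)) \<or> (\<exists>w. p = (1, \<alpha> w, eta w))"
proof
  assume "p \<in> Gam"
  then show "(\<exists>z. p = (0, \<tau> z, z)) \<or> (\<exists>w. p = (1, \<alpha> w, eta w))"
    by (auto simp: Gam_def gamma_def heis_mult_def heisX_def eta_def)
next
  assume "(\<exists>z. p = (0, \<tau> z, z)) \<or> (\<exists>w. p = (1, \<alpha> w, eta w))"
  then show "p \<in> Gam"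
  proof
    assume "\<exists>z. p = (0, \<tau> z, z)" then show ?thesis by (auto simp: Gam_def gamma_def)
  next
    assume "\<exists>w. p = (1, \<alpha> w, eta w)"
    then obtain w where w: "p = (1, \<alpha> w, eta w)" by blast
    have "p = heis_mult heisX (0, \<alpha> w, w)" using w by (simp add: heis_mult_def heisX_def eta_def)
    moreover have "(0, \<alpha> w, w) \<in> gamma \<alpha>" by (auto simp: gamma_def)
    ultimately show ?thesis by (auto simp: Gam_def)
  qed
qed

lemma vproj_P:
  assumes H: "hh z = eta w"
  shows "vproj (P t z w) = (t, (1-t)^2 * z + 2*t*(1-t)*hh z + t^2 * w)"
proof -
  have a: "\<alpha> w = 2*z - \<tau> z - 2*w" using H unfolding hh_def eta_def by linarith
  have "z - t * \<tau> z / 2 - t * (\<tau> z + t * (\<alpha> w - \<tau> z)) / 2 = (1-t)^2 * z + 2*t*(1-t)*(z - \<tau> z / 2) + t^2 * w"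
    unfolding a power2_eq_square by (simp add: field_simps)
  then show ?thesis by (simp add: P_eq vproj_def hh_def)
qed

lemma G_strict:
  assumes "hh z = eta w" "hh z' = eta w'" "w < w'" "0 < t" "t \<le> 1"
  shows "(1-t)^2 * z + 2*t*(1-t)*hh z + t^2 * w < (1-t)^2 * z' + 2*t*(1-t)*hh z' + t^2 * w'"
proof -
  have h: "hh z \<le> hh z'" using assms eta_mono[of w w'] by simp
  then have "z \<le> z'" using hh_le_iff by simp
  then have 1: "(1-t)^2 * z \<le> (1-t)^2 * z'" by (simp add: mult_left_mono)
  have c0: "0 \<le> 2*t*(1-t)" using assms by simp
  have 2: "2*t*(1-t)*hh z \<le> 2*t*(1-t)*hh z'" by (rule mult_left_mono[OF h c0])
  have 3: "t^2 * w < t^2 * w'" using assms by simp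
  show ?thesis using 1 2 3 by linarith
qed

lemma inj_S0: "inj_on vproj S0"
proof (rule inj_onI)
  fix p q assume "p \<in> S0" "q \<in> S0" and e: "vproj p = vproj q"
  then obtain t z w t' z' w' where p: "p = P t z w" "0 \<le> t" "t \<le> 1" "hh z = eta w"
    and q: "q = P t' z' w'" "0 \<le> t'" "t' \<le> 1" "hh z' = eta w'"
    unfolding S0_def by blast
  have e1: "t = t'" using e p q vproj_P by simp
  have e2: "(1-t)^2 * z + 2*t*(1-t)*hh z + t^2 * w = (1-t)^2 * z' + 2*t*(1-t)*hh z' + t^2 * w'"
    using e p q vproj_P e1 by simp
  show "p = q"
  proof (cases "t = 0")
    case True
    then have "z = z'" using e2 by simp
    then show ?thesis using p q True e1 by (simp add: P_eq)
  next
    case False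
    then have t0: "0 < t" using p by simp
    have "w = w'"
    proof (cases w w' rule: linorder_cases)
      case less then show ?thesis using G_strict[OF p(4) q(4) less t0 p(3)] e2 by simp
    next
      case greater then show ?thesis using G_strict[OF q(4) p(4) greater t0 p(3)] e2 by simp
    qed simp
    moreover then have "z = z'" using p q hh_inj by simp
    ultimately show ?thesis using p q e1 by simp
  qed
qed

lemma vproj_S0: "vproj ` S0 = {0..1} \<times> UNIV"
proof
  show "vproj ` S0 \<subseteq> {0..1} \<times> UNIV" unfolding S0_def using vproj_P by auto
next
  show "{0..1} \<times> UNIV \<subseteq> vproj ` S0"
  proof (rule subsetI)
    fix x assume "x \<in> {0..1::real} \<times> (UNIV::real set)"
    then obtain t y where x: "x = (t, y)" and t: "0 \<le> t" "t \<le> 1" by auto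
    show "x \<in> vproj ` S0"
    proof (cases "t = 0")
      case True
      obtain w where w: "eta w = hh y" using eta_surj by blast
      have "P 0 y w \<in> S0" unfolding S0_def using w by force
      moreover have "vproj (P 0 y w) = (0, y)" using vproj_P[of y w 0] w by simp
      ultimately show ?thesis using True x by (metis image_eqI)
    next
      case False
      then have t0: "0 < t" using t by simp
      define g where "g w = (1-t)^2 * Z w + 2*t*(1-t)*eta w + t^2 * w" for w
      have gc: "continuous_on UNIV g" unfolding g_def
        by (intro continuous_intros Z_cont eta_cont)
      have gm: "t^2 * (s' - s) \<le> g s' - g s" if "s \<le> s'" for s s'
      proof -
        have "(1-t)^2 * Z s \<le> (1-t)^2 * Z s'" using Z_mono[OF that] by (simp add: mult_left_mono)
        moreover have "2*t*(1-t)*eta s \<le> 2*t*(1-t)*eta s'"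
          using eta_mono[OF that] t by (intro mult_left_mono) auto
        ultimately show ?thesis unfolding g_def by (simp add: algebra_simps)
      qed
      obtain w where gw: "g w = y" using surj_lemma[OF gc _ gm] t0 by force
      have "P t (Z w) w \<in> S0" unfolding S0_def using hhZ t by blast
      moreover have "vproj (P t (Z w) w) = (t, y)" using vproj_P[OF hhZ[of w], of t] gw hhZ[of w]
        unfolding g_def by simp
      ultimately show ?thesis using x by (metis image_eqI)
    qed
  qed
qed

lemma bdry_S0: "graph_boundary S0 = Gam"
proof -
  have gb: "graph_boundary S0 = {p \<in> S0. fst p \<in> {0,1}}"
    unfolding graph_boundary_def vproj_S0 frontier_strip by (auto simp: vproj_def)
  show ?thesis
  proof
    show "graph_boundary S0 \<subseteq> Gam"
    proof
      fix p assume "p \<in> graph_boundary S0"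
      then have "p \<in> S0" "fst p \<in> {0,1}" unfolding gb by auto
      then obtain t z w where p: "p = P t z w" "hh z = eta w" "t = 0 \<or> t = 1"
        unfolding S0_def by (auto simp: P_eq)
      show "p \<in> Gam" unfolding Gam_iff
        using p by (auto simp: P_eq hh_def)
    qed
  next
    show "Gam \<subseteq> graph_boundary S0"
    proof
      fix p assume "p \<in> Gam"
      then consider z where "p = (0, \<tau> z, z)" | w where "p = (1, \<alpha> w, eta w)"
        unfolding Gam_iff by blast
      then show "p \<in> graph_boundary S0"
      proof cases
        case (1 z)
        obtain w where w: "eta w = hh z" using eta_surj by blast
        have "p = P 0 z w" using 1 by (simp add: P_eq)
        moreover have "P 0 z w \<in> S0" unfolding S0_def using w by force
        ultimately show ?thesis unfolding gb by (simp add: P_eq)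
      next
        case (2 w)
        have "p = P 1 (Z w) w" using 2 hhZ[of w] by (simp add: P_eq hh_def)
        moreover have "P 1 (Z w) w \<in> S0" unfolding S0_def using hhZ by force
        ultimately show ?thesis unfolding gb by (simp add: P_eq)
      qed
    qed
  qed
qed

lemma ruled_S0: "ruled S0"
  unfolding ruled_def
proof (rule exI[of _ Fam], intro conjI ballI)
  show "S0 = \<Union>Fam" by (rule S0_Union)
next
  fix R assume "R \<in> Fam"
  then obtain z w where R: "R = horiz_seg (pp z) (vv z w)" "hh z = eta w" unfolding Fam_def by blast
  have "horizontal (vv z w)" by (simp add: horizontal_def vv_def)
  moreover have "pp z \<in> graph_boundary S0" unfolding bdry_S0 Gam_iff pp_def by blast
  moreover have "heis_mult (pp z) (vv z w) \<in> graph_boundary S0"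
  proof -
    have "heis_mult (pp z) (vv z w) = (1, \<alpha> w, eta w)"
      using R(2) by (simp add: heis_mult_def pp_def vv_def hh_def)
    then show ?thesis unfolding bdry_S0 Gam_iff by blast
  qed
  ultimately show "\<exists>p v. horizontal v \<and> R = horiz_seg p v \<and> p \<in> graph_boundary S0 \<and> heis_mult p v \<in> graph_boundary S0"
    using R by blast
qed

lemma seg_char:
  assumes hv: "horizontal v" and p: "p \<in> Gam" and q: "heis_mult p v \<in> Gam"
  shows "\<exists>z w. hh z = eta w \<and> horiz_seg p v = horiz_seg (pp z) (vv z w)"
proof -
  obtain a b where v: "v = (a, b, 0)" and ab: "\<not> (a = 0 \<and> b = 0)"
    using hv by (cases v) (auto simp: horizontal_def)
  from p consider z where "p = (0, \<tau> z, z)" | w where "p = (1, \<alpha> w, eta w)"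
    unfolding Gam_iff by blast
  then show ?thesis
  proof cases
    case (1 z)
    have m: "heis_mult p v = (a, \<tau> z + b, z - \<tau> z * a / 2)" using 1 v by (simp add: heis_mult_def)
    from q consider z' where "heis_mult p v = (0, \<tau> z', z')" | w where "heis_mult p v = (1, \<alpha> w, eta w)"
      unfolding Gam_iff by blast
    then show ?thesis
    proof cases
      case (1 z')
      then have "a = 0" "z' = z" "\<tau> z + b = \<tau> z'" using m by auto
      then show ?thesis using ab by simp
    next
      case (2 w)
      then have e: "a = 1" "\<tau> z + b = \<alpha> w" "z - \<tau> z / 2 = eta w" using m by auto
      then have "hh z = eta w" "v = vv z w" "p = pp z" using v 1 by (auto simp: hh_def vv_def pp_def)
      then show ?thesis by blast
    qed
  next
    case (2 w)
    have m: "heis_mult p v = (1 + a, \<alpha> w + b, eta w + (b - \<alpha> w * a) / 2)" using 2 v by (simp add: heis_mult_def)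
    from q consider z where "heis_mult p v = (0, \<tau> z, z)" | w' where "heis_mult p v = (1, \<alpha> w', eta w')"
      unfolding Gam_iff by blast
    then show ?thesis
    proof cases
      case (2 w')
      then have e: "a = 0" "\<alpha> w + b = \<alpha> w'" "eta w + b / 2 = eta w'" using m by auto
      then have "w' = w" unfolding eta_def by linarith
      then have "b = 0" using e by simp
      then show ?thesis using ab e by simp
    next
      case (1 z)
      then have a1: "a = -1" using m by auto
      then have e: "a = -1" "\<alpha> w + b = \<tau> z" "eta w + (b + \<alpha> w) / 2 = z" using m 1 by auto
      have "(b + \<alpha> w) / 2 = \<tau> z / 2" using e(2) by (simp add: add.commute)
      then have H: "hh z = eta w" using e(3) unfolding hh_def by linarith
      have bb: "b = \<tau> z - \<alpha> w" using e by simp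
      have zz: "z = eta w + \<tau> z / 2" using H unfolding hh_def by linarith
      have pt: "heis_mult p (hscale t v) = P (1 - t) z w" for t
      proof -
        have "heis_mult p (hscale t v) = (1 - t, \<alpha> w + t * (\<tau> z - \<alpha> w), eta w + t * \<tau> z / 2)"
          using 2 v e(1) bb by (simp add: heis_mult_def hscale_def field_simps)
        also have "\<dots> = P (1 - t) z w" unfolding P_eq
          by (subst (3) zz) (simp add: field_simps)
        finally show ?thesis .
      qed
      have "horiz_seg p v = horiz_seg (pp z) (vv z w)"
      proof
        show "horiz_seg p v \<subseteq> horiz_seg (pp z) (vv z w)"
        proof
          fix x assume "x \<in> horiz_seg p v"
          then obtain t where t: "0 \<le> t" "t \<le> 1" "x = heis_mult p (hscale t v)"
            unfolding horiz_seg_def by blast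
          then have "x = heis_mult (pp z) (hscale (1 - t) (vv z w))" using pt by (simp add: P_def)
          then show "x \<in> horiz_seg (pp z) (vv z w)" unfolding horiz_seg_def using t
            by (intro CollectI exI[of _ "1 - t"]) simp
        qed
      next
        show "horiz_seg (pp z) (vv z w) \<subseteq> horiz_seg p v"
        proof
          fix x assume "x \<in> horiz_seg (pp z) (vv z w)"
          then obtain s where s: "0 \<le> s" "s \<le> 1" "x = P s z w"
            unfolding horiz_seg_def P_def by blast
          then have "x = heis_mult p (hscale (1 - s) v)" using pt[of "1 - s"] by simp
          then show "x \<in> horiz_seg p v" unfolding horiz_seg_def using s
            by (intro CollectI exI[of _ "1 - s"]) simp
        qed
      qed
      then show ?thesis using H by blast
    qed
  qed
qed

lemma unique_S0:
  assumes r: "ruled S" and b: "graph_boundary S = Gam"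
  shows "S = S0"
proof -
  from r obtain F where FF: "S = \<Union>F \<and> (\<forall>R\<in>F. \<exists>p v. horizontal v \<and> R = horiz_seg p v \<and>
        p \<in> graph_boundary S \<and> heis_mult p v \<in> graph_boundary S)"
    unfolding ruled_def by (rule exE)
  have F: "S = \<Union>F" using FF by (rule conjunct1)
  have FR0: "\<forall>R\<in>F. \<exists>p v. horizontal v \<and> R = horiz_seg p v \<and>
        p \<in> graph_boundary S \<and> heis_mult p v \<in> graph_boundary S" using FF by (rule conjunct2)
  have Fsub: "\<exists>z w. hh z = eta w \<and> R = horiz_seg (pp z) (vv z w)" if "R \<in> F" for R
  proof -
    have "\<exists>p v. horizontal v \<and> R = horiz_seg p v \<and>
        p \<in> graph_boundary S \<and> heis_mult p v \<in> graph_boundary S" using FR0 that by (rule bspec)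
    then obtain p v where pv0: "horizontal v \<and> R = horiz_seg p v \<and>
        p \<in> graph_boundary S \<and> heis_mult p v \<in> graph_boundary S" by blast
    have pv: "horizontal v" "R = horiz_seg p v" "p \<in> Gam" "heis_mult p v \<in> Gam"
      using pv0 b by simp_all
    obtain z w where "hh z = eta w" "horiz_seg p v = horiz_seg (pp z) (vv z w)"
      using seg_char[OF pv(1) pv(3) pv(4)] by blast
    then show ?thesis using pv(2) by blast
  qed
  show ?thesis
  proof
    show "S \<subseteq> S0"
    proof
      fix x assume "x \<in> S"
      then obtain R where "R \<in> F" "x \<in> R" using F by blast
      then obtain z w where "hh z = eta w" "R = horiz_seg (pp z) (vv z w)" using Fsub by blast
      then have "R \<in> Fam" unfolding Fam_def by blast
      then show "x \<in> S0" using \<open>x \<in> R\<close> S0_Union by blast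
    qed
  next
    show "S0 \<subseteq> S"
    proof
      fix x assume "x \<in> S0"
      then obtain t z w where x: "x = P t z w" "0 \<le> t" "t \<le> 1" and H: "hh z = eta w"
        unfolding S0_def by blast
      have "(1, \<alpha> w, eta w) \<in> Gam" unfolding Gam_iff by blast
      then have "(1, \<alpha> w, eta w) \<in> graph_boundary S" using b by simp
      then have "(1, \<alpha> w, eta w) \<in> S" unfolding graph_boundary_def by simp
      then obtain R where R: "R \<in> F" "(1, \<alpha> w, eta w) \<in> R" using F by blast
      then obtain z' w' where H': "hh z' = eta w'" and R': "R = horiz_seg (pp z') (vv z' w')"
        using Fsub by blast
      have "(1, \<alpha> w, eta w) \<in> horiz_seg (pp z') (vv z' w')" using R(2) R' by simp
      then obtain s where "(1, \<alpha> w, eta w) = heis_mult (pp z') (hscale s (vv z' w'))"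
        unfolding horiz_seg_def by blast
      then have "(1, \<alpha> w, eta w) = P s z' w'" by (simp add: P_def)
      then have e: "s = 1" "\<alpha> w = \<alpha> w'" "eta w = z' - \<tau> z' / 2" by (auto simp: P_eq)
      then have "eta w = eta w'" using H' by (simp add: hh_def)
      then have ww: "w' = w" using e unfolding eta_def by linarith
      then have "z' = z" using H H' hh_inj by simp
      then have "R = horiz_seg (pp z) (vv z w)" using R' ww by simp
      moreover have "x \<in> horiz_seg (pp z) (vv z w)" using x unfolding horiz_seg_def P_def by blast
      ultimately have "x \<in> R" by simp
      then show "x \<in> S" using R(1) F by blast
    qed
  qed
qed

end


theorem lemma3p6:
  fixes \<alpha> \<tau> :: "real \<Rightarrow> real"
  assumes "continuous_on UNIV \<alpha>" and "continuous_on UNIV \<tau>"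
    and "\<forall>s t. s < t \<longrightarrow> (\<alpha> s - \<alpha> t) / (s - t) \<ge> -2"
    and "range (\<lambda>w. w + \<alpha> w / 2) = UNIV"
    and "\<exists>L<2. L-lipschitz_on UNIV \<tau>"
  shows "\<exists>!S. is_intrinsic_graph S \<and> ruled S \<and>
           graph_boundary S = gamma \<tau> \<union> heis_mult heisX ` gamma \<alpha>"
proof -
  obtain L where L: "L < 2" "L-lipschitz_on UNIV \<tau>" using assms(5) by blast
  interpret rc \<alpha> \<tau> L
    by (rule rc.intro) (use assms(1-4) L in auto)
  have G: "Gam = gamma \<tau> \<union> heis_mult heisX ` gamma \<alpha>" by (simp add: Gam_def)
  show ?thesis
  proof (rule ex1I[of _ S0])
    show "is_intrinsic_graph S0 \<and> ruled S0 \<and> graph_boundary S0 = gamma \<tau> \<union> heis_mult heisX ` gamma \<alpha>"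
      using graph_of_inj[OF inj_S0] ruled_S0 bdry_S0 G by simp
  next
    fix S assume "is_intrinsic_graph S \<and> ruled S \<and> graph_boundary S = gamma \<tau> \<union> heis_mult heisX ` gamma \<alpha>"
    then have "ruled S" "graph_boundary S = Gam" using G by auto
    then show "S = S0" by (rule unique_S0)
  qed
qed

end
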